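(* Fix an association $\kappa$ in which every UE is served by at least one cell and every cell serves at least one UE, and fix a demand vector $\bm{d}\in\mathbb{R}^m_{>0}$. Let $\bm{p}\in\mathbb{R}^n_{>0}$, let $\alpha>1$, and set $\bm{p}'=\bm{p}/\alpha$. Let $\bm{x}$ be the fixed point $\bm{x}=\bm{f}(\bm{h}(\bm{x},\bm{p},\kappa),\bm{d},\kappa)$, and let $\bm{x}'$ be the fixed point $\bm{x}'=\bm{f}(\bm{h}(\bm{x}',\bm{p}',\kappa),\bm{d},\kappa)$. Then $x'_i<\alpha x_i$ for all $i\in\mathcal{I}$.
   Context: Cellular network model. $\mathcal{I}$ is a set of $n$ cells and $\mathcal{J}$ a set of $m$ UEs. For an association $\kappa\in\{0,1\}^{n\times m}$, let $\mathcal{I}_j=\{i:\kappa_{ij}=1\}$ and $\mathcal{J}_i=\{j:\kappa_{ij}=1\}$. $M,B>0$ are constants, $\sigma^2>0$ is the noise power and $g_{ij}>0$ are the channel gains. For $\bm{x}\in\mathbb{R}^n_{\ge0}$ and $\bm{p}\in\mathbb{R}^n_{>0}$: - $h_j(\bm{x},\bm{p},\kappa)=\dfrac{\sum_{i\in\mathcal{I}_j}p_ig_{ij}}{\sum_{k\in\mathcal{I}\setminus\mathcal{I}_j}p_kg_{kj}x_k+\sigma^2}$; - $f_i(\bm{\gamma},\bm{d},\kappa)=\sum_{j\in\mathcal{J}_i}\dfrac{d_j}{MB\log_2(1+\gamma_j)}$. It is known, and assumed here, that for fixed $\bm{p},\bm{d},\kappa$ the map $\bm{x}\mapsto\bm{f}(\bm{h}(\bm{x},\bm{p},\kappa),\bm{d},\kappa)$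 is a standard interference function with a unique fixed point in $\mathbb{R}^n_{\ge0}$. *)

theory Defs
  imports Complex_Main
begin

text \<open>Cells are the elements of a finite type 'i, UEs of a finite type 'j.
  An association kappa is a 0/1 matrix, represented as a boolean relation:
  kappa i j means kappa_ij = 1.\<close>

definition hfun :: "('i::finite \<Rightarrow> 'j::finite \<Rightarrow> bool) \<Rightarrow> ('i \<Rightarrow> 'j \<Rightarrow> real) \<Rightarrow> real
    \<Rightarrow> ('i \<Rightarrow> real) \<Rightarrow> ('i \<Rightarrow> real) \<Rightarrow> 'j \<Rightarrow> real" where
  "hfun \<kappa> g \<sigma>2 x p j =
     (\<Sum>i\<in>{i. \<kappa> i j}. p i * g i j) /
     ((\<Sum>k\<in>{k. \<not> \<kappa> k j}. p k * g k j * x k) + \<sigma>2)"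

definition ffun :: "('i::finite \<Rightarrow> 'j::finite \<Rightarrow> bool) \<Rightarrow> real \<Rightarrow> real
    \<Rightarrow> ('j \<Rightarrow> real) \<Rightarrow> ('j \<Rightarrow> real) \<Rightarrow> 'i \<Rightarrow> real" where
  "ffun \<kappa> M B \<gamma> d i = (\<Sum>j\<in>{j. \<kappa> i j}. d j / (M * B * log 2 (1 + \<gamma> j)))"

end

theory Submission
  imports Defs
begin

lemma ln_strict: fixes z :: real assumes "z > 0" "z \<noteq> 1" shows "ln z < z - 1"
proof -
  have s: "sqrt z > 0" using assms by simp
  have "ln z = 2 * ln (sqrt z)" using assms by (simp add: ln_sqrt)
  also have "\<dots> \<le> 2 * (sqrt z - 1)" using ln_le_minus_one[OF s] by simp
  also have "\<dots> < z - 1"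
  proof -
    have "sqrt z \<noteq> 1" using assms by simp
    hence "(sqrt z - 1)^2 > 0" by simp
    moreover have "(sqrt z)^2 = z" using assms by simp
    ultimately show ?thesis by (simp add: power2_eq_square algebra_simps)
  qed
  finally show ?thesis .
qed

lemma key: fixes c g :: real assumes "c > 1" "g > 0" shows "ln (1+g) < c * ln (1+g/c)"
proof -
  have c0: "c > 0" using assms by simp
  define u where "u = g/c"
  have u: "u > 0" using assms by (simp add: u_def)
  have l1: "ln (1/(1+u)) \<le> 1/(1+u) - 1" using u by (intro ln_le_minus_one) simp
  hence l1': "ln (1+u) \<ge> u/(1+u)" using u by (simp add: ln_div field_simps)
  have z: "(1+g)/(1+u) > 0" "(1+g)/(1+u) \<noteq> 1"
    using u assms c0 by (auto simp: u_def field_simps add_pos_pos)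
  have "ln (1+g) - ln (1+u) = ln ((1+g)/(1+u))" using u assms by (simp add: ln_div)
  also have "\<dots> < (1+g)/(1+u) - 1" by (rule ln_strict[OF z])
  also have "\<dots> = (c-1) * (u/(1+u))" using u c0 by (simp add: u_def field_simps)
  also have "\<dots> \<le> (c-1) * ln (1+u)" using l1' assms by (intro mult_left_mono) auto
  finally show ?thesis by (simp add: u_def algebra_simps)
qed

lemma term_ineq: fixes c g g' D K :: real
  assumes "c > 1" "g > 0" "g' \<ge> g/c" "D > 0" "K > 0"
  shows "D/(K*log 2 (1+g')) < c*(D/(K*log 2 (1+g)))"
proof -
  have gc: "g/c > 0" using assms by simp
  have q1: "0 < 1 + g/c" "0 < 1 + g'" using gc assms by linarith+
  have a: "ln (1+g/c) \<le> ln (1+g')" using q1 assms(3) by simp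
  have b: "ln (1+g) < c * ln (1+g/c)" by (rule key) (use assms in auto)
  have "1 < 1 + g/c" "1 < 1 + g" using gc assms by linarith+
  hence p1: "ln (1+g/c) > 0" "ln (1+g) > 0" by (auto intro: ln_gt_zero)
  have "D/(K*log 2 (1+g')) = D * ln 2 /(K*ln (1+g'))" by (simp add: log_def)
  also have "\<dots> \<le> D * ln 2 /(K*ln (1+g/c))"
    using a p1 assms by (intro divide_left_mono mult_left_mono mult_pos_pos) auto
  also have "\<dots> < D * ln 2 / (K * (ln (1+g) / c))"
    using b p1 assms by (intro divide_strict_left_mono mult_strict_left_mono mult_pos_pos) (auto simp: field_simps)
  also have "\<dots> = c*(D/(K*log 2 (1+g)))" by (simp add: log_def field_simps)
  finally show ?thesis .
qed

lemma hpos: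
  fixes \<kappa> :: "'i::finite \<Rightarrow> 'j::finite \<Rightarrow> bool"
  assumes "\<exists>i. \<kappa> i j" "\<sigma>2 > 0" "\<forall>i j. g i j > 0" "\<forall>i. q i > 0" "\<forall>i. z i \<ge> 0"
  shows "hfun \<kappa> g \<sigma>2 z q j > 0"
proof -
  obtain i where i: "\<kappa> i j" using assms by auto
  have "(\<Sum>i\<in>{i. \<kappa> i j}. q i * g i j) > 0"
    using i assms by (intro sum_pos) auto
  moreover have "(\<Sum>k\<in>{k. \<not> \<kappa> k j}. q k * g k j * z k) \<ge> 0"
    using assms by (intro sum_nonneg) (simp add: less_imp_le)
  ultimately show ?thesis using assms unfolding hfun_def by (intro divide_pos_pos) auto
qed

theorem lemma4:
  fixes \<kappa> :: "'i::finite \<Rightarrow> 'j::finite \<Rightarrow> bool"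
    and g :: "'i \<Rightarrow> 'j \<Rightarrow> real"
    and M B \<sigma>2 \<alpha> :: real
    and d :: "'j \<Rightarrow> real"
    and p x x' :: "'i \<Rightarrow> real"
  assumes "\<forall>j. \<exists>i. \<kappa> i j"
    and "\<forall>i. \<exists>j. \<kappa> i j"
    and "M > 0" and "B > 0" and "\<sigma>2 > 0"
    and "\<forall>i j. g i j > 0"
    and "\<forall>j. d j > 0"
    and "\<forall>i. p i > 0"
    and "\<alpha> > 1"
    and "\<forall>i. x i \<ge> 0"
    and "\<forall>i. x i = ffun \<kappa> M B (hfun \<kappa> g \<sigma>2 x p) d i"
    and "\<forall>i. x' i \<ge> 0"
    and "\<forall>i. x' i = ffun \<kappa> M B (hfun \<kappa> g \<sigma>2 x' (\<lambda>i. p i / \<alpha>)) d i"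
  shows "\<forall>i. x' i < \<alpha> * x i"
proof -
  have MB: "M * B > 0" using assms by simp
  have hx: "\<And>j. hfun \<kappa> g \<sigma>2 x p j > 0" using assms by (intro hpos) auto
  have xpos: "x i > 0" for i
  proof -
    obtain j where j: "\<kappa> i j" using assms(2) by blast
    have lg: "\<And>j. log 2 (1 + hfun \<kappa> g \<sigma>2 x p j) > 0"
    proof -
      fix j have "1 < 1 + hfun \<kappa> g \<sigma>2 x p j" using hx[of j] by linarith
      thus "log 2 (1 + hfun \<kappa> g \<sigma>2 x p j) > 0" by simp
    qed
    hence "ffun \<kappa> M B (hfun \<kappa> g \<sigma>2 x p) d i > 0"
      unfolding ffun_def using j assms MB by (intro sum_pos divide_pos_pos) auto
    thus ?thesis using assms by metis
  qed
  define r where "r k = x' k / (\<alpha> * x k)" for k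
  define t where "t = Max (range r)"
  have "t \<in> range r" unfolding t_def by (rule Max_in) auto
  then obtain i where ri: "r i = t" by auto
  have rle: "r k \<le> t" for k unfolding t_def by (intro Max_ge) auto
  have ax: "\<alpha> * x k > 0" for k using xpos assms by simp
  have t1: "t < 1"
  proof (rule ccontr)
    assume "\<not> t < 1" hence t1: "t \<ge> 1" by simp
    define c where "c = \<alpha> * t"
    have c1: "c > 1" using t1 assms unfolding c_def by (smt (verit) mult_le_cancel_left1)
    have xk: "x' k \<le> \<alpha> * t * x k" for k
      using rle[of k] ax[of k] unfolding r_def by (simp add: divide_le_eq algebra_simps)
    have xi: "x' i = \<alpha> * t * x i"
    proof -
      have "x' i = r i * (\<alpha> * x i)" using xpos[of i] assms(9) unfolding r_def by simp
      thus ?thesis using ri by simp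
    qed
    have hcmp: "hfun \<kappa> g \<sigma>2 x' (\<lambda>i. p i / \<alpha>) j \<ge> hfun \<kappa> g \<sigma>2 x p j / c" for j
    proof -
      define S where "S = (\<Sum>i\<in>{i. \<kappa> i j}. p i * g i j)"
      define I where "I = (\<Sum>k\<in>{k. \<not> \<kappa> k j}. p k * g k j * x k)"
      define I' where "I' = (\<Sum>k\<in>{k. \<not> \<kappa> k j}. p k / \<alpha> * g k j * x' k)"
      have S: "S > 0" unfolding S_def using assms by (intro sum_pos) (auto intro: mult_pos_pos)
      have I0: "I \<ge> 0" unfolding I_def using assms by (intro sum_nonneg) (simp add: less_imp_le)
      have I'0: "I' \<ge> 0" unfolding I'_def using assms by (intro sum_nonneg mult_nonneg_nonneg) (auto simp: less_imp_le)
      have "I' \<le> (\<Sum>k\<in>{k. \<not> \<kappa> k j}. t * (p k * g k j * x k))"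
        unfolding I'_def
      proof (intro sum_mono)
        fix k
        have pg: "p k / \<alpha> * g k j > 0" using assms by simp
        have "p k / \<alpha> * g k j * x' k \<le> p k / \<alpha> * g k j * (\<alpha> * t * x k)"
          using xk[of k] pg by (intro mult_left_mono) auto
        also have "\<dots> = t * (p k * g k j * x k)" using assms by (simp add: field_simps)
        finally show "p k / \<alpha> * g k j * x' k \<le> t * (p k * g k j * x k)" .
      qed
      hence I'le: "I' \<le> t * I" unfolding I_def by (simp add: sum_distrib_left)
      have "\<sigma>2 \<le> t * \<sigma>2" using t1 assms(5) by simp
      hence "I' + \<sigma>2 \<le> t * (I + \<sigma>2)" using I'le by (simp add: distrib_left)
      have h1: "hfun \<kappa> g \<sigma>2 x' (\<lambda>i. p i / \<alpha>) j = (S / \<alpha>) / (I' + \<sigma>2)"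
        unfolding hfun_def S_def I'_def by (simp add: sum_divide_distrib)
      have h2: "hfun \<kappa> g \<sigma>2 x p j / c = (S / \<alpha>) / (t * (I + \<sigma>2))"
        unfolding hfun_def S_def I_def c_def by (simp add: field_simps)
      show ?thesis unfolding h1 h2
        using \<open>I' + \<sigma>2 \<le> t * (I + \<sigma>2)\<close> S assms I'0
        by (intro divide_left_mono) auto
    qed
    have "x' i = ffun \<kappa> M B (hfun \<kappa> g \<sigma>2 x' (\<lambda>i. p i / \<alpha>)) d i" using assms by metis
    also have "\<dots> < (\<Sum>j\<in>{j. \<kappa> i j}. c * (d j / (M * B * log 2 (1 + hfun \<kappa> g \<sigma>2 x p j))))"
      unfolding ffun_def
    proof (rule sum_strict_mono)
      show "{j. \<kappa> i j} \<noteq> {}" using assms by auto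
      fix j assume "j \<in> {j. \<kappa> i j}"
      show "d j / (M * B * log 2 (1 + hfun \<kappa> g \<sigma>2 x' (\<lambda>i. p i / \<alpha>) j))
          < c * (d j / (M * B * log 2 (1 + hfun \<kappa> g \<sigma>2 x p j)))"
        using term_ineq[OF c1 hx hcmp] assms MB by auto
    qed simp
    also have "\<dots> = c * x i" using assms unfolding ffun_def by (simp add: sum_distrib_left)
    also have "\<dots> = x' i" using xi unfolding c_def by simp
    finally show False by simp
  qed
  show ?thesis
  proof
    fix k
    have "r k < 1" using rle[of k] t1 by simp
    thus "x' k < \<alpha> * x k" using ax[of k] unfolding r_def by (simp add: divide_less_eq)
  qed
qed

end
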